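(* Let $(x_k)_{k\ge0}$ be indeterminates, define $a_n=x_n$ if $n=2^k-1$ for some integer $k\ge0$ and $a_n=0$ otherwise, and let $D(n)=\det\left(a_{i+j+1}\right)_{i,j=0}^{n-1}$ with $D(0)=1$. For $k\ge1$ and $n\ge0$ let $\mu_k(n)$ be the degree of $D(n)$ in the variable $x_{2^k-1}$. Then for every $k\ge1$ and $0\le i\le 2^{k-1}-1$: $$\mu_k(i)=0,\quad \mu_k(2^{k-1}+i)=2i+1,\quad \mu_k(2^k+i)=2^k-2i-1,\quad \mu_k(2^k+2^{k-1}+i)=0,$$ and for $n\ge 2^{k+1}$, $\mu_k(n)=\mu_k(n\bmod 2^{k+1})$.
   Context: The paper writes $D(n)=(-1)^{\sum_i\binom{\mu_i(n)}{2}}\prod_{i\ge1}x_{2^i-1}^{\mu_i(n)}$, so $\mu_i(n)$ is the exponent of $x_{2^i-1}$ in $D(n)$. *)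

theory Defs
  imports "HOL-Library.Poly_Mapping" "Jordan_Normal_Form.Determinant"
begin

text \<open>Multivariate polynomials over the integers in the indeterminates x_0, x_1, ...:
  finitely supported maps from monomials (exponent vectors nat =>0 nat) to coefficients.\<close>
type_synonym mpoly = "(nat \<Rightarrow>\<^sub>0 nat) \<Rightarrow>\<^sub>0 int"

definition Var :: "nat \<Rightarrow> mpoly" where
  "Var n = Poly_Mapping.single (Poly_Mapping.single n 1) 1"

definition degree_in :: "nat \<Rightarrow> mpoly \<Rightarrow> nat" where
  "degree_in v p = Max (insert 0 ((\<lambda>m. Poly_Mapping.lookup m v) ` Poly_Mapping.keys p))"

definition a_seq :: "nat \<Rightarrow> mpoly" where
  "a_seq n = (if \<exists>k::nat. n = 2 ^ k - 1 then Var n else 0)"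

definition D :: "nat \<Rightarrow> mpoly" where
  "D n = (if n = 0 then 1 else det (mat n n (\<lambda>(i, j). a_seq (i + j + 1))))"

definition mu :: "nat \<Rightarrow> nat \<Rightarrow> nat" where
  "mu k n = degree_in (2 ^ k - 1) (D n)"

end

theory Submission
  imports Defs "HOL-Library.Discrete_Functions"
begin

definition P :: "nat \<Rightarrow> nat" where "P n = 2 * 2 ^ floor_log n"
definition pw :: "nat \<Rightarrow> bool" where "pw x = (\<exists>j. x = 2 ^ j)"

lemma P_bounds: "n > 0 \<Longrightarrow> n < P n \<and> P n \<le> 2 * n"
  unfolding P_def using floor_log_exp2_gt[of n] floor_log_exp2_le[of n] by simp

lemma P_pw: "pw (P n)" unfolding P_def pw_def by (metis power_Suc)

lemma pw_unique: assumes "pw x" "pw y" "y < 2 * x" "x < 2 * y" shows "x = y"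
proof -
  obtain a b where a: "x = 2^a" and b: "y = 2^b" using assms unfolding pw_def by blast
  have "2^b < (2::nat)^Suc a" using assms(3) a b by simp
  hence "b < Suc a" using power_less_imp_less_exp[of "2::nat" b "Suc a"] by simp
  moreover have "2^a < (2::nat)^Suc b" using assms(4) a b by simp
  hence "a < Suc b" using power_less_imp_less_exp[of "2::nat" a "Suc b"] by simp
  ultimately show ?thesis using a b by simp
qed

function sig :: "nat \<Rightarrow> nat \<Rightarrow> nat" where
  "sig n i = (if n \<le> i then i else if P n - n - 1 \<le> i then P n - 2 - i else sig (P n - n - 1) i)"
  by auto
termination
  apply (relation "measure fst")
   apply simp
  subgoal for n i using P_bounds[of n] by auto
  done

declare sig.simps [simp del]

lemma sig_ge: "n \<le> i \<Longrightarrow> sig n i = i" by (simp add: sig.simps)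
lemma sig_hi: "i < n \<Longrightarrow> P n - n - 1 \<le> i \<Longrightarrow> sig n i = P n - 2 - i" by (simp add: sig.simps)
lemma sig_lo: "i < n \<Longrightarrow> i < P n - n - 1 \<Longrightarrow> sig n i = sig (P n - n - 1) i"
  by (simp add: sig.simps)

lemma sig_props: "\<forall>i<n. sig n i < n \<and> sig n (sig n i) = i \<and> pw (i + sig n i + 2)"
proof (induction n rule: less_induct)
  case (less n)
  show ?case
  proof (intro allI impI)
    fix i assume i: "i < n"
    define s where "s = P n - n - 1"
    have b: "n < P n" "P n \<le> 2 * n" using P_bounds[of n] i by auto
    show "sig n i < n \<and> sig n (sig n i) = i \<and> pw (i + sig n i + 2)"
    proof (cases "s \<le> i")
      case True
      have e: "sig n i = P n - 2 - i" using sig_hi[of i n] i True s_def by simp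
      have l: "P n - 2 - i < n" "s \<le> P n - 2 - i" using True b i s_def by auto
      have "sig n (P n - 2 - i) = P n - 2 - (P n - 2 - i)" using sig_hi[of "P n - 2 - i" n] l s_def by simp
      also have "\<dots> = i" using b i by simp
      moreover have eq: "i + sig n i + 2 = P n" using e b i by simp
      ultimately show ?thesis using e l P_pw[of n] by (simp only: eq)
    next
      case False
      have sn: "s < n" using b s_def by simp
      have e: "sig n i = sig s i" using sig_lo[of i n] i False s_def by simp
      have ih: "sig s i < s \<and> sig s (sig s i) = i \<and> pw (i + sig s i + 2)"
        using less.IH[OF sn] False by simp
      have "sig n (sig s i) = sig s (sig s i)" using sig_lo[of "sig s i" n] ih sn s_def by simp
      thus ?thesis using e ih sn by simp
    qed
  qed
qed

lemma sig_permutes: "sig n permutes {0..<n}"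
proof (rule bij_imp_permutes)
  show "bij_betw (sig n) {0..<n} {0..<n}"
    by (rule bij_betw_byWitness[where f'="sig n"]) (use sig_props[of n] in auto)
  show "\<And>x. x \<notin> {0..<n} \<Longrightarrow> sig n x = x" by (simp add: sig_ge)
qed

lemma L1: assumes "i < n" "j < n" "pw (i + j + 2)" "P n \<le> 2 * (i + 1)"
  shows "j = P n - 2 - i"
proof -
  have b: "n < P n" "P n \<le> 2 * n" using P_bounds[of n] assms by auto
  have "i + j + 2 = P n" by (rule pw_unique[OF assms(3) P_pw]) (use assms b in auto)
  thus ?thesis by simp
qed

lemma sig_unique: "inj_on p {0..<n} \<Longrightarrow> p ` {0..<n} \<subseteq> {0..<n} \<Longrightarrow> (\<forall>i<n. pw (i + p i + 2))
   \<Longrightarrow> \<forall>i<n. p i = sig n i"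
proof (induction n rule: less_induct)
  case (less n)
  note inj = less.prems(1) and into = less.prems(2) and good = less.prems(3)
  have onto: "p ` {0..<n} = {0..<n}" using endo_inj_surj[OF _ into inj] by simp
  define s where "s = P n - n - 1"
  have blk: "p i = P n - 2 - i" if i: "s \<le> i" "i < n" for i
  proof -
    have b: "n < P n" "P n \<le> 2 * n" using P_bounds[of n] i by auto
    have pin: "p i < n" using into i by force
    show ?thesis
    proof (cases "P n \<le> 2 * (i + 1)")
      case True
      then show ?thesis using L1[OF i(2) pin] good i by simp
    next
      case False
      define j where "j = P n - 2 - i"
      have j: "j < n" "P n \<le> 2 * (j + 1)" using i b False s_def j_def by auto
      then obtain i' where i': "i' < n" "p i' = j" using onto by (metis atLeastLessThan_iff imageE zero_le)
      have "pw (i' + j + 2)" using good i' by auto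
      hence "pw (j + i' + 2)" by (simp add: add.commute)
      hence "i' = P n - 2 - j" using L1[OF j(1) i'(1)] j by simp
      also have "\<dots> = i" using j_def False b i by simp
      finally show ?thesis using i' j_def by simp
    qed
  qed
  show ?case
  proof (intro allI impI)
    fix i assume i: "i < n"
    show "p i = sig n i"
    proof (cases "s \<le> i")
      case True
      thus ?thesis using blk[OF True i] sig_hi[of i n] i s_def by simp
    next
      case False
      have b: "n < P n" "P n \<le> 2 * n" using P_bounds[of n] i by auto
      have sn: "s < n" using b s_def by simp
      have into': "p ` {0..<s} \<subseteq> {0..<s}"
      proof
        fix y assume "y \<in> p ` {0..<s}"
        then obtain x where x: "x < s" "y = p x" by auto
        have "x \<in> {0..<n}" using x sn by simp
        hence "p x \<in> {0..<n}" using into by blast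
        hence yn: "p x < n" by simp
        show "y \<in> {0..<s}"
        proof (rule ccontr)
          assume "y \<notin> {0..<s}"
          hence ys: "s \<le> p x" using x by simp
          define t where "t = P n - 2 - p x"
          have t: "s \<le> t" "t < n" using ys yn b s_def t_def by auto
          have "p t = P n - 2 - t" using blk[OF t] .
          also have "\<dots> = p x" using t_def yn b s_def ys by simp
          finally have "t = x" using inj t x sn by (auto simp: inj_on_def)
          thus False using t x by simp
        qed
      qed
      have inj': "inj_on p {0..<s}" using inj sn by (auto intro: inj_on_subset)
      have "\<forall>i<s. p i = sig s i" using less.IH[OF sn inj' into'] good sn by auto
      thus ?thesis using False sig_lo[of i n] i s_def by simp
    qed
  qed
qed

definition cnt :: "nat \<Rightarrow> nat \<Rightarrow> nat" where
  "cnt K n = (\<Sum>i\<in>{0..<n}. if i + sig n i + 2 = K then 1 else 0)"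

lemma cnt_0: "cnt K 0 = 0" by (simp add: cnt_def)

lemma cnt_rec: assumes "n > 0"
  shows "cnt K n = (if P n = K then 2 * n + 1 - P n else 0) + cnt K (P n - n - 1)"
proof -
  define s where "s = P n - n - 1"
  have b: "n < P n" "P n \<le> 2 * n" using P_bounds[of n] assms by auto
  have sn: "s \<le> n" using b s_def by simp
  let ?f = "\<lambda>i. if i + sig n i + 2 = K then 1 else (0::nat)"
  have "cnt K n = sum ?f {0..<s} + sum ?f {s..<n}"
    unfolding cnt_def using sum.atLeastLessThan_concat[of 0 s n ?f] sn by simp
  moreover have "sum ?f {0..<s} = cnt K s"
    unfolding cnt_def by (rule sum.cong) (use sig_lo[of _ n] sn s_def in auto)
  moreover have "sum ?f {s..<n} = sum (\<lambda>i. if P n = K then 1 else 0) {s..<n}"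
  proof (rule sum.cong)
    fix i assume i: "i \<in> {s..<n}"
    have "i + sig n i + 2 = P n" using sig_hi[of i n] i s_def b by auto
    thus "?f i = (if P n = K then 1 else 0)" by simp
  qed simp
  moreover have "n - s = 2 * n + 1 - P n" using s_def b by simp
  ultimately show ?thesis using s_def by (auto simp: mult_2)
qed

definition gH :: "nat \<Rightarrow> nat \<Rightarrow> nat" where
  "gH H y = (if y < H then 0 else if y < 2*H then 2*y+1-2*H else if y < 3*H then 6*H-1-2*y else 0)"

lemma gH_sym: assumes "y < 4*H" shows "gH H (4*H-1-y) = gH H y"
proof -
  consider "y < H" | "H \<le> y" "y < 2*H" | "2*H \<le> y" "y < 3*H" | "3*H \<le> y" by linarith
  then show ?thesis
  proof cases
    case 1 then show ?thesis using assms unfolding gH_def by simp arith?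
  next
    case 2 then show ?thesis using assms unfolding gH_def by simp arith?
  next
    case 3 then show ?thesis using assms unfolding gH_def by simp arith?
  next
    case 4 then show ?thesis using assms unfolding gH_def by simp arith?
  qed
qed

lemma cnt_g: assumes "k \<ge> 1" shows "cnt (2^k) n = gH (2^(k-1)) (n mod (4 * 2^(k-1)))"
proof (induction n rule: less_induct)
  case (less n)
  define K :: nat where "K = 2^k"
  define H :: nat where "H = 2^(k-1)"
  have "(2::nat)^k = 2^(Suc (k-1))" using assms by simp
  hence K: "K = 2 * H" unfolding K_def H_def by simp
  have H1: "H \<ge> 1" using H_def by simp
  have goal: "cnt K n = gH H (n mod (4 * H))"
  proof (cases "n = 0")
    case True thus ?thesis using H1 by (simp add: cnt_0 gH_def)
  next
    case False
    define s where "s = P n - n - 1"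
    have b: "n < P n" "P n \<le> 2 * n" using P_bounds[of n] False by auto
    have sn: "s < n" using b s_def by simp
    have rec: "cnt K n = (if P n = K then 2 * n + 1 - P n else 0) + cnt K s"
      using cnt_rec[of n K] False s_def by simp
    have ih: "cnt K s = gH H (s mod (4*H))" using less.IH[OF sn] K_def H_def by simp
    consider "n < H" | "H \<le> n" "n < K" | "K \<le> n" by linarith
    then show ?thesis
    proof cases
      case 1
      have "P n \<noteq> K" using b 1 K by simp
      moreover have "s mod (4*H) = s" "n mod (4*H) = n" using sn 1 by simp_all
      ultimately show ?thesis using rec ih 1 sn by (simp add: gH_def)
    next
      case 2
      have pK: "pw K" unfolding pw_def K_def by blast
      have PK: "P n = K" by (rule pw_unique[OF P_pw pK]) (use b 2 K in linarith)+
      have "s < H" using s_def PK 2 K by simp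
      hence "cnt K s = 0" using ih by (simp add: gH_def)
      moreover have "n mod (4*H) = n" using 2 K by simp
      ultimately show ?thesis using rec PK 2 K unfolding gH_def by simp
    next
      case 3
      have "floor_log K \<le> floor_log n" using 3 floor_log_le_iff by blast
      hence fl: "k \<le> floor_log n" using K_def by simp
      define q :: nat where "q = 2 ^ (floor_log n - k)"
      have "(2::nat)^floor_log n = 2^(k + (floor_log n - k))" using fl by simp
      hence Pq: "P n = 4 * H * q" unfolding P_def q_def using K K_def by (simp add: power_add)
      have PnK: "P n \<noteq> K" using b 3 by simp
      define a where "a = n div (4*H)"
      define r where "r = n mod (4*H)"
      have nar: "n = 4*H*a + r" using a_def r_def by simp
      have r2: "r < 4*H" using r_def H1 by simp
      have "4*H*a < 4*H*q" using nar b Pq by linarith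
      hence aq: "a < q" by simp
      have qc: "q = a + 1 + (q-a-1)" using aq by simp
      have "4*H*q = 4*H*a + 4*H*(q-a-1) + 4*H" by (subst qc) (simp add: algebra_simps)
      hence sE: "s = (4*H - 1 - r) + 4*H*(q-a-1)" using s_def Pq nar r2 by linarith
      have "s mod (4*H) = (4*H - 1 - r) mod (4*H)" unfolding sE by (rule mod_mult_self2)
      also have "\<dots> = 4*H - 1 - r" using r2 by simp
      finally have "s mod (4*H) = 4*H - 1 - r" .
      hence "cnt K s = gH H (4*H - 1 - r)" using ih by simp
      also have "\<dots> = gH H r" using gH_sym[OF r2] .
      finally show ?thesis using rec PnK r_def by simp
    qed
  qed
  thus ?case using K_def H_def by simp
qed

lemma pw_iff: "pw (i + j + 2) \<longleftrightarrow> (\<exists>k::nat. i + j + 1 = 2 ^ k - 1)"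
proof
  assume "pw (i + j + 2)" then obtain k where "i + j + 2 = 2^k" unfolding pw_def by blast
  thus "\<exists>k::nat. i + j + 1 = 2 ^ k - 1" by (intro exI[of _ k]) simp
next
  assume "\<exists>k::nat. i + j + 1 = 2 ^ k - 1"
  then obtain k :: nat where k: "i + j + 1 = 2 ^ k - 1" by blast
  have "(2::nat)^k \<ge> 1" by simp
  hence "i + j + 2 = 2^k" using k by linarith
  thus "pw (i + j + 2)" unfolding pw_def by blast
qed

lemma prod_Var: "finite A \<Longrightarrow> (\<Prod>i\<in>A. Var (f i)) = Poly_Mapping.single (\<Sum>i\<in>A. Poly_Mapping.single (f i) 1) 1"
proof (induction A rule: finite_induct)
  case empty then show ?case by simp
next
  case (insert x A)
  then show ?case by (simp add: Var_def mult_single)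
qed

lemma D_eq: assumes "n > 0"
  shows "D n = of_int (sign (sig n)) * (\<Prod>i = 0..<n. Var (i + sig n i + 1))"
proof -
  define A :: "mpoly mat" where "A = mat n n (\<lambda>(i, j). a_seq (i + j + 1))"
  have DA: "D n = det A" using assms unfolding D_def A_def by simp
  have car: "A \<in> carrier_mat n n" unfolding A_def by simp
  let ?S = "{p. p permutes {0..<n}}"
  let ?t = "\<lambda>p. signof p * (\<Prod>i = 0..<n. A $$ (i, p i)) :: mpoly"
  have fin: "finite ?S" by (simp add: finite_permutations)
  have sigS: "sig n \<in> ?S" using sig_permutes by simp
  have zero: "?t p = 0" if p: "p \<in> ?S - {sig n}" for p
  proof -
    have pp: "p permutes {0..<n}" and pn: "p \<noteq> sig n" using p by auto
    have "\<not> (\<forall>i<n. pw (i + p i + 2))"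
    proof
      assume good: "\<forall>i<n. pw (i + p i + 2)"
      have inj: "inj_on p {0..<n}" using permutes_inj[OF pp] by (simp add: inj_on_def inj_def)
      have into: "p ` {0..<n} \<subseteq> {0..<n}" using permutes_image[OF pp] by simp
      have eq: "\<forall>i<n. p i = sig n i" using sig_unique[OF inj into good] .
      have "p = sig n"
      proof
        fix x show "p x = sig n x"
        proof (cases "x < n")
          case True thus ?thesis using eq by simp
        next
          case False
          hence "p x = x" using permutes_not_in[OF pp] by simp
          thus ?thesis using False sig_ge by simp
        qed
      qed
      thus False using pn by simp
    qed
    then obtain i where i: "i < n" "\<not> pw (i + p i + 2)" by blast
    have pin: "p i < n" using permutes_in_image[OF pp, of i] i by simp
    have "A $$ (i, p i) = 0" unfolding A_def using i pin pw_iff[of i "p i"] by (simp add: a_seq_def)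
    hence "(\<Prod>i = 0..<n. A $$ (i, p i)) = 0" using i by (intro prod_zero) auto
    thus ?thesis by simp
  qed
  have "det A = sum ?t ?S" using det_def'[OF car] by simp
  also have "\<dots> = ?t (sig n) + sum ?t (?S - {sig n})" using sum.remove[OF fin sigS] by simp
  also have "sum ?t (?S - {sig n}) = 0" using zero by (intro sum.neutral) blast
  also have "(\<Prod>i = 0..<n. A $$ (i, sig n i)) = (\<Prod>i = 0..<n. Var (i + sig n i + 1))"
  proof (rule prod.cong)
    fix i assume i: "i \<in> {0..<n}"
    have props: "sig n i < n" "pw (i + sig n i + 2)" using sig_props[of n] i by auto
    show "A $$ (i, sig n i) = Var (i + sig n i + 1)"
      unfolding A_def using i props pw_iff[of i "sig n i"] by (simp add: a_seq_def)
  qed simp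
  finally show ?thesis using DA by simp
qed

lemma mu_cnt: "mu k n = cnt (2^k) n"
proof (cases "n = 0")
  case True
  have "D 0 = Poly_Mapping.single 0 1" by (simp add: D_def)
  thus ?thesis using True by (simp add: mu_def degree_in_def cnt_0)
next
  case False
  define m where "m = (\<Sum>i\<in>{0..<n}. Poly_Mapping.single (i + sig n i + 1) (1::nat))"
  have "D n = Poly_Mapping.single 0 (of_int (sign (sig n))) * Poly_Mapping.single m 1"
    using D_eq[of n] False prod_Var[of "{0..<n}" "\<lambda>i. i + sig n i + 1"] unfolding m_def
    by (simp only: single_of_int) simp
  also have "\<dots> = Poly_Mapping.single m (sign (sig n))" by (simp add: mult_single)
  finally have Dn: "D n = Poly_Mapping.single m (sign (sig n))" .
  have "mu k n = Poly_Mapping.lookup m (2^k - 1)"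
    unfolding mu_def degree_in_def Dn by simp
  also have "\<dots> = (\<Sum>i\<in>{0..<n}. if i + sig n i + 2 = 2^k then 1 else 0)"
    unfolding m_def lookup_sum
  proof (rule sum.cong)
    fix i
    have "(2::nat)^k \<ge> 1" by simp
    hence "(i + sig n i + 1 = 2^k - 1) = (i + sig n i + 2 = 2^k)" by linarith
    thus "Poly_Mapping.lookup (Poly_Mapping.single (i + sig n i + 1) 1) (2 ^ k - 1) =
      (if i + sig n i + 2 = 2^k then 1 else 0)" by (simp add: lookup_single when_def)
  qed simp
  finally show ?thesis unfolding cnt_def .
qed

theorem theorem5p5:
  fixes k :: nat
  assumes "k \<ge> 1"
  shows "(\<forall>i::nat. i \<le> 2 ^ (k - 1) - 1 \<longrightarrow>
            mu k i = 0 \<and>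
            mu k (2 ^ (k - 1) + i) = 2 * i + 1 \<and>
            mu k (2 ^ k + i) = 2 ^ k - 2 * i - 1 \<and>
            mu k (2 ^ k + 2 ^ (k - 1) + i) = 0)
       \<and> (\<forall>n::nat. n \<ge> 2 ^ (k + 1) \<longrightarrow> mu k n = mu k (n mod 2 ^ (k + 1)))"
proof -
  define H :: nat where "H = 2^(k-1)"
  have "(2::nat)^k = 2^(Suc (k-1))" using assms by simp
  hence K: "(2::nat)^k = 2 * H" unfolding H_def by simp
  have K1: "(2::nat)^(k+1) = 4 * H" using K by simp
  have H1: "H \<ge> 1" unfolding H_def by simp
  have mu_g: "mu k n = gH H (n mod (4 * H))" for n
    using mu_cnt[of k n] cnt_g[OF assms, of n] unfolding H_def by simp
  show ?thesis
  proof (intro conjI allI impI)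
    fix i :: nat assume i: "i \<le> 2 ^ (k - 1) - 1"
    hence iH: "i < H" using H1 unfolding H_def by linarith
    show "mu k i = 0" using iH by (simp add: mu_g gH_def)
    show "mu k (2 ^ (k - 1) + i) = 2 * i + 1" using iH unfolding H_def[symmetric] by (simp add: mu_g gH_def)
    show "mu k (2 ^ k + i) = 2 ^ k - 2 * i - 1" using iH unfolding K by (simp add: mu_g gH_def)
    show "mu k (2 ^ k + 2 ^ (k - 1) + i) = 0" using iH unfolding K H_def[symmetric] by (simp add: mu_g gH_def)
  next
    fix n :: nat assume "n \<ge> 2 ^ (k + 1)"
    show "mu k n = mu k (n mod 2 ^ (k + 1))" unfolding K1 mu_g by simp
  qed
qed

end
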